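(* Let $\rho\in[0,1)$. The nonlinear process started from $\eta(0)\sim\pi_\rho$ has the same law as the M/D/1 queue with arrival rate $\rho$ started from its stationary distribution $\pi_\rho$; in particular $\rho(t)=\rho$ for all $t$ and the nonlinear process is stationary. Conversely, if the nonlinear process (with arbitrary initial law on $\mathbb{Z}_+$) is stationary, then $\eta(0)\sim\pi_{\rho}$ for some $\rho\in[0,1)$ (namely $\rho=\mathbb{P}(\eta(0)>0)$).
   Context: The nonlinear process $(\eta(t))_{t\in\mathbb{Z}_+}$ takes values in $\mathbb{Z}_+$: $\eta(0)$ has a given distribution; given $\eta(t)$, set $\rho(t):=\mathbb{P}(\eta(t)>0)$, let $N_{t+1}$ be Poisson with mean $\rho(t)$ (mean $0$ meaning identically $0$), independent of everything before, and set $\eta(t+1):=\eta(t)-\mathbf{1}(\eta(t)>0)+N_{t+1}$. The M/D/1 queue with arrival rate $\rho\ge 0$ is the Markov chain $(\zeta(t))_{t\in\mathbb{Z}_+}$ on $\mathbb{Z}_+$ given by $\zeta(t+1):=\zeta(t)-\mathbf{1}(\zeta(t)>0)+M_{t+1}$, where $(M_t)_{t\ge1}$ are i.i.d. Poisson random variables with mean $\rho$, independent of $\zeta(0)$. For $\rho<1$ this chain is irreducible, aperiodic and positive recurrent; $\pi_\rho$ denotes its unique invariant probability measure. *)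

theory Defs
  imports "HOL-Probability.Probability"
begin

text \<open>Poisson law with mean r; mean 0 means identically 0.
  The library's poisson_pmf is only meaningful for positive rates.\<close>
definition pois :: "real \<Rightarrow> nat pmf" where
  "pois r = (if r = 0 then return_pmf 0 else poisson_pmf r)"

definition step_pmf :: "real \<Rightarrow> nat \<Rightarrow> nat pmf" where
  "step_pmf r n = map_pmf (\<lambda>k. n - (if n > 0 then 1 else 0) + k) (pois r)"

definition pos_prob :: "nat pmf \<Rightarrow> real" where
  "pos_prob \<mu> = measure_pmf.prob \<mu> {n. n > 0}"

primrec nl_marg :: "nat pmf \<Rightarrow> nat \<Rightarrow> nat pmf" where
  "nl_marg \<mu> 0 = \<mu>"
| "nl_marg \<mu> (Suc t) = bind_pmf (nl_marg \<mu> t) (step_pmf (pos_prob (nl_marg \<mu> t)))"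

definition nl_rho :: "nat pmf \<Rightarrow> nat \<Rightarrow> real" where
  "nl_rho \<mu> t = pos_prob (nl_marg \<mu> t)"

text \<open>Joint law of (eta(0),...,eta(n)) of the nonlinear process, as a list of length n+1.\<close>
primrec nl_path :: "nat pmf \<Rightarrow> nat \<Rightarrow> nat list pmf" where
  "nl_path \<mu> 0 = map_pmf (\<lambda>x. [x]) \<mu>"
| "nl_path \<mu> (Suc n) =
     bind_pmf (nl_path \<mu> n) (\<lambda>xs. map_pmf (\<lambda>y. xs @ [y]) (step_pmf (nl_rho \<mu> n) (last xs)))"

primrec md1_path :: "real \<Rightarrow> nat pmf \<Rightarrow> nat \<Rightarrow> nat list pmf" where
  "md1_path \<rho> \<mu> 0 = map_pmf (\<lambda>x. [x]) \<mu>"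
| "md1_path \<rho> \<mu> (Suc n) =
     bind_pmf (md1_path \<rho> \<mu> n) (\<lambda>xs. map_pmf (\<lambda>y. xs @ [y]) (step_pmf \<rho> (last xs)))"

definition md1_invariant :: "real \<Rightarrow> nat pmf \<Rightarrow> bool" where
  "md1_invariant \<rho> \<nu> \<longleftrightarrow> bind_pmf \<nu> (step_pmf \<rho>) = \<nu>"

definition md1_pi :: "real \<Rightarrow> nat pmf" where
  "md1_pi \<rho> = (THE \<nu>. md1_invariant \<rho> \<nu>)"

definition nl_stationary :: "nat pmf \<Rightarrow> bool" where
  "nl_stationary \<mu> \<longleftrightarrow> (\<forall>k n. map_pmf (drop k) (nl_path \<mu> (k + n)) = nl_path \<mu> n)"

end

theory Submission imports Defs begin


locale qa =
  fixes a :: "nat \<Rightarrow> real" and r :: real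
  assumes a_nn: "\<And>i. 0 \<le> a i" and a_sums: "a sums 1" and a0: "0 < a 0"
    and mean: "(\<lambda>i. real i * a i) sums r"
begin

definition A :: "nat \<Rightarrow> real" where "A m = (\<Sum>i\<le>m. a i)"
definition Ab :: "nat \<Rightarrow> real" where "Ab m = 1 - A m"

lemma a_summable: "summable a" using a_sums by (simp add: sums_iff)
lemma mean_summable: "summable (\<lambda>i. real i * a i)" using mean by (simp add: sums_iff)

lemma sa: "summable (\<lambda>n. a (n + k))"
  by (rule summable_ignore_initial_segment[OF a_summable])

lemma Ab_tail: "Ab m = (\<Sum>n. a (n + Suc m))"
proof -
  have "suminf a = (\<Sum>n. a (n + Suc m)) + (\<Sum>i<Suc m. a i)"
    by (rule suminf_split_initial_segment[OF a_summable])
  moreover have "suminf a = 1" using a_sums by (simp add: sums_iff)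
  ultimately show ?thesis unfolding Ab_def A_def by (simp add: lessThan_Suc_atMost)
qed

lemma Ab_nn: "0 \<le> Ab m"
  unfolding Ab_tail
  using sa[of "Suc m"] by (intro suminf_nonneg) (auto intro: a_nn)

lemma Ab_0: "Ab 0 = 1 - a 0" by (simp add: Ab_def A_def)

lemma Ab_Suc: "Ab N = a (Suc N) + Ab (Suc N)"
  by (simp add: Ab_def A_def)

lemma Ab_partial: "(\<Sum>m<N. Ab m) = (\<Sum>i\<le>N. real i * a i) + real N * Ab N"
proof (induction N)
  case 0 then show ?case by simp
next
  case (Suc N)
  have "(\<Sum>m<Suc N. Ab m) = (\<Sum>i\<le>N. real i * a i) + real N * Ab N + Ab N"
    using Suc by simp
  also have "\<dots> = (\<Sum>i\<le>N. real i * a i) + (real N + 1) * (a (Suc N) + Ab (Suc N))"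
    using Ab_Suc[of N] by (simp add: algebra_simps)
  also have "\<dots> = (\<Sum>i\<le>Suc N. real i * a i) + real (Suc N) * Ab (Suc N)"
    by (simp add: algebra_simps)
  finally show ?case .
qed

lemma NAb_le: "real N * Ab N \<le> r - (\<Sum>i\<le>N. real i * a i)"
proof -
  have s: "summable (\<lambda>n. real (n + Suc N) * a (n + Suc N))"
    using summable_ignore_initial_segment[OF mean_summable, of "Suc N"] by simp
  have "r = (\<Sum>n. real (n + Suc N) * a (n + Suc N)) + (\<Sum>i<Suc N. real i * a i)"
    using suminf_split_initial_segment[OF mean_summable, of "Suc N"] mean by (simp add: sums_iff)
  hence eq: "r - (\<Sum>i\<le>N. real i * a i) = (\<Sum>n. real (n + Suc N) * a (n + Suc N))"
    by (simp add: lessThan_Suc_atMost)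
  have "real N * Ab N = (\<Sum>n. real N * a (n + Suc N))"
    unfolding Ab_tail by (rule suminf_mult[symmetric]) (rule summable_ignore_initial_segment[OF a_summable])
  also have "\<dots> \<le> (\<Sum>n. real (n + Suc N) * a (n + Suc N))"
    using s sa[of "Suc N"] by (intro suminf_le) (auto intro!: mult_right_mono a_nn summable_mult)
  finally show ?thesis using eq by simp
qed

lemma Ab_sums: "Ab sums r"
  unfolding sums_def
proof (rule tendsto_sandwich[of "\<lambda>N. \<Sum>i\<le>N. real i * a i" _ _ "\<lambda>_. r"])
  show "\<forall>\<^sub>F N in sequentially. (\<Sum>i\<le>N. real i * a i) \<le> (\<Sum>m<N. Ab m)"
    using Ab_partial by (auto intro!: always_eventually mult_nonneg_nonneg Ab_nn)
  show "\<forall>\<^sub>F N in sequentially. (\<Sum>m<N. Ab m) \<le> r"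
    using Ab_partial NAb_le by (auto intro!: always_eventually) (smt (verit))
  show "(\<lambda>_. r) \<longlonglongrightarrow> r" by simp
  have "(\<lambda>N. \<Sum>i<N. real i * a i) \<longlonglongrightarrow> r" using mean by (simp add: sums_def)
  hence "(\<lambda>N. \<Sum>i<Suc N. real i * a i) \<longlonglongrightarrow> r" by (rule LIMSEQ_Suc)
  thus "(\<lambda>N. \<Sum>i\<le>N. real i * a i) \<longlonglongrightarrow> r" by (simp add: lessThan_Suc_atMost)
qed

definition bal :: "(nat \<Rightarrow> real) \<Rightarrow> nat \<Rightarrow> bool" where
  "bal \<nu> m \<longleftrightarrow> \<nu> m = \<nu> 0 * a m + (\<Sum>j\<le>m. \<nu> (Suc j) * a (m - j))"
definition C :: "(nat \<Rightarrow> real) \<Rightarrow> nat \<Rightarrow> bool" where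
  "C \<nu> n \<longleftrightarrow> (\<Sum>m\<le>n. \<nu> m) = \<nu> 0 * A n + (\<Sum>k\<le>n. \<nu> (Suc k) * A (n - k))"
definition cut :: "(nat \<Rightarrow> real) \<Rightarrow> nat \<Rightarrow> bool" where
  "cut \<nu> n \<longleftrightarrow> \<nu> (Suc n) = \<nu> 0 * Ab n + (\<Sum>k\<le>n. \<nu> (Suc k) * Ab (n - k))"

lemma A_Suc: "A (Suc j) = A j + a (Suc j)" by (simp add: A_def)
lemma A_0: "A 0 = a 0" by (simp add: A_def)

lemma conv_step: "(\<Sum>k\<le>Suc n. f k * A (Suc n - k)) =
   (\<Sum>k\<le>n. f k * A (n - k)) + (\<Sum>k\<le>Suc n. f k * a (Suc n - k))"
proof -
  have "(\<Sum>k\<le>n. f k * A (Suc n - k)) = (\<Sum>k\<le>n. f k * A (n - k) + f k * a (Suc n - k))"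
    by (rule sum.cong) (auto simp: Suc_diff_le A_Suc algebra_simps)
  thus ?thesis by (simp add: sum.distrib A_0 algebra_simps)
qed

lemma bal_C: assumes "\<And>m. bal \<nu> m" shows "C \<nu> n"
proof (induction n)
  case 0 then show ?case using assms[of 0] by (simp add: bal_def C_def A_0 algebra_simps)
next
  case (Suc n)
  have "(\<Sum>m\<le>Suc n. \<nu> m) = \<nu> 0 * A n + (\<Sum>k\<le>n. \<nu> (Suc k) * A (n - k)) + \<nu> (Suc n)"
    using Suc by (simp add: C_def)
  also have "\<nu> (Suc n) = \<nu> 0 * a (Suc n) + (\<Sum>j\<le>Suc n. \<nu> (Suc j) * a (Suc n - j))"
    using assms[of "Suc n"] by (simp add: bal_def)
  finally show ?case unfolding C_def conv_step[of "\<lambda>k. \<nu> (Suc k)"] by (simp add: A_Suc algebra_simps)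
qed

lemma C_bal: assumes "\<And>n. C \<nu> n" shows "bal \<nu> m"
proof (cases m)
  case 0 then show ?thesis using assms[of 0] by (simp add: bal_def C_def A_0 algebra_simps)
next
  case (Suc n)
  have h1: "(\<Sum>m\<le>Suc n. \<nu> m) = \<nu> 0 * A (Suc n) + (\<Sum>k\<le>Suc n. \<nu> (Suc k) * A (Suc n - k))"
    using assms[of "Suc n"] by (simp add: C_def)
  have h2: "(\<Sum>m\<le>n. \<nu> m) = \<nu> 0 * A n + (\<Sum>k\<le>n. \<nu> (Suc k) * A (n - k))"
    using assms[of n] by (simp add: C_def)
  show ?thesis using h1 h2 unfolding Suc bal_def conv_step[of "\<lambda>k. \<nu> (Suc k)"]
    by (simp add: A_Suc algebra_simps)
qed

lemma C_cut: "C \<nu> n \<longleftrightarrow> cut \<nu> n"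
proof -
  have e: "(\<Sum>m\<le>n. \<nu> m) + \<nu> (Suc n) = \<nu> 0 + (\<Sum>k\<le>n. \<nu> (Suc k))"
    using sum.atMost_Suc[of \<nu> n] sum.atMost_Suc_shift[of \<nu> n] by simp
  have f: "(\<Sum>k\<le>n. \<nu> (Suc k) * Ab (n - k)) = (\<Sum>k\<le>n. \<nu> (Suc k)) - (\<Sum>k\<le>n. \<nu> (Suc k) * A (n - k))"
    by (simp add: Ab_def algebra_simps sum_subtractf)
  show ?thesis unfolding C_def cut_def f using e by (auto simp: Ab_def algebra_simps)
qed

lemma bal_iff_cut: "(\<forall>m. bal \<nu> m) \<longleftrightarrow> (\<forall>n. cut \<nu> n)"
  using bal_C C_bal C_cut by blast

lemma cut_iff: "cut \<nu> n \<longleftrightarrow> \<nu> (Suc n) * a 0 = \<nu> 0 * Ab n + (\<Sum>k<n. \<nu> (Suc k) * Ab (n - k))"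
proof -
  have "(\<Sum>k\<le>n. \<nu> (Suc k) * Ab (n - k)) = (\<Sum>k<n. \<nu> (Suc k) * Ab (n - k)) + \<nu> (Suc n) * Ab 0"
    by (metis (no_types, lifting) lessThan_Suc_atMost sum.lessThan_Suc diff_self_eq_0)
  thus ?thesis unfolding cut_def by (auto simp: Ab_0 algebra_simps)
qed

lemma determ:
  assumes "\<And>n. cut \<nu> n" "\<And>n. cut \<mu> n" "\<nu> 0 = \<mu> 0"
  shows "\<nu> n = \<mu> n"
proof (induction n rule: less_induct)
  case (less n)
  show ?case
  proof (cases n)
    case 0 then show ?thesis using assms by simp
  next
    case (Suc m)
    have "(\<Sum>k<m. \<nu> (Suc k) * Ab (m - k)) = (\<Sum>k<m. \<mu> (Suc k) * Ab (m - k))"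
      using less Suc by (intro sum.cong) auto
    hence "\<nu> (Suc m) * a 0 = \<mu> (Suc m) * a 0"
      using assms(1)[of m] assms(2)[of m] assms(3) unfolding cut_iff by simp
    thus ?thesis using a0 Suc by simp
  qed
qed

lemma Ab_summable: "summable Ab" using Ab_sums by (simp add: sums_iff)

lemma cut_sum:
  assumes cut: "\<And>n. cut \<nu> n" and nn: "\<And>n. 0 \<le> \<nu> n" and s: "\<nu> sums 1"
  shows "\<nu> 0 = 1 - r"
proof -
  have s1: "(\<lambda>n. \<nu> (Suc n)) sums (1 - \<nu> 0)" using s by (simp add: sums_Suc_iff)
  have n1: "summable (\<lambda>k. norm (\<nu> (Suc k)))" using s1 nn by (simp add: sums_iff)
  have n2: "summable (\<lambda>k. norm (Ab k))" using Ab_summable Ab_nn by simp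
  have "(\<lambda>n. \<Sum>k\<le>n. \<nu> (Suc k) * Ab (n - k)) sums ((\<Sum>k. \<nu> (Suc k)) * (\<Sum>k. Ab k))"
    by (rule Cauchy_product_sums[OF n1 n2])
  hence c: "(\<lambda>n. \<Sum>k\<le>n. \<nu> (Suc k) * Ab (n - k)) sums ((1 - \<nu> 0) * r)"
    using s1 Ab_sums by (simp add: sums_iff)
  have "(\<lambda>n. \<nu> 0 * Ab n + (\<Sum>k\<le>n. \<nu> (Suc k) * Ab (n - k))) sums (\<nu> 0 * r + (1 - \<nu> 0) * r)"
    by (intro sums_add sums_mult c Ab_sums)
  moreover have "(\<lambda>n. \<nu> (Suc n)) = (\<lambda>n. \<nu> 0 * Ab n + (\<Sum>k\<le>n. \<nu> (Suc k) * Ab (n - k)))"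
    using cut unfolding cut_def by (intro ext) blast
  ultimately have "(\<lambda>n. \<nu> (Suc n)) sums (\<nu> 0 * r + (1 - \<nu> 0) * r)" by simp
  hence "1 - \<nu> 0 = \<nu> 0 * r + (1 - \<nu> 0) * r" using s1 sums_unique2 by blast
  thus ?thesis by (simp add: algebra_simps)
qed

lemma zero_cut: "cut (\<lambda>_. 0) n" by (simp add: cut_def)

lemma trunc_cauchy:
  fixes f g :: "nat \<Rightarrow> real"
  assumes "\<And>k. 0 \<le> f k" "\<And>k. 0 \<le> g k"
  shows "(\<Sum>n<N. \<Sum>k\<le>n. f k * g (n - k)) \<le> (\<Sum>k<N. f k) * (\<Sum>k<N. g k)"
proof -
  have "(\<Sum>n<N. \<Sum>k\<le>n. f k * g (n - k)) = (\<Sum>(i,j)\<in>{(i,j). i+j < N}. f i * g j)"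
    by (rule sum.triangle_reindex[symmetric])
  also have "\<dots> \<le> (\<Sum>(i,j)\<in>{..<N} \<times> {..<N}. f i * g j)"
    by (rule sum_mono2) (auto intro!: mult_nonneg_nonneg assms)
  also have "\<dots> = (\<Sum>k<N. f k) * (\<Sum>k<N. g k)"
    by (simp add: sum_product sum.Sigma)
  finally show ?thesis .
qed

end

locale qa1 = qa +
  assumes r1: "r < 1"
begin

fun c :: "nat \<Rightarrow> real" where
  "c 0 = 1"
| "c (Suc n) = (Ab n + (\<Sum>k<n. c (Suc k) * Ab (n - k))) / a 0"

declare c.simps(2)[simp del]

lemma c_cut: "cut c n"
  unfolding cut_iff c.simps(2)[of n] using a0 by simp

lemma c_nn: "0 \<le> c n"
proof (induction n rule: less_induct)
  case (less n)
  show ?case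
  proof (cases n)
    case (Suc m)
    show ?thesis unfolding Suc c.simps(2)[of m]
      using less Suc by (auto intro!: divide_nonneg_pos add_nonneg_nonneg sum_nonneg mult_nonneg_nonneg Ab_nn a0)
  qed simp
qed

lemma c_summable: "summable c"
proof -
  have r0: "0 \<le> r" using suminf_nonneg[OF Ab_summable Ab_nn] Ab_sums by (simp add: sums_iff)
  have bnd: "(\<Sum>n<N. c (Suc n)) \<le> r / (1 - r)" for N
  proof -
    have "(\<Sum>n<N. c (Suc n)) = (\<Sum>n<N. Ab n) + (\<Sum>n<N. \<Sum>k\<le>n. c (Suc k) * Ab (n - k))"
    proof -
      have ce: "c (Suc n) = Ab n + (\<Sum>k\<le>n. c (Suc k) * Ab (n - k))" for n
        using c_cut[of n] unfolding cut_def by simp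
      have "(\<Sum>n<N. c (Suc n)) = (\<Sum>n<N. Ab n + (\<Sum>k\<le>n. c (Suc k) * Ab (n - k)))"
        by (rule sum.cong[OF refl ce])
      thus ?thesis by (simp add: sum.distrib)
    qed
    also have "\<dots> \<le> r + (\<Sum>n<N. c (Suc n)) * r"
    proof (rule add_mono)
      show "(\<Sum>n<N. Ab n) \<le> r"
        using sum_le_suminf[OF Ab_summable, of "{..<N}"] Ab_nn Ab_sums by (simp add: sums_iff)
      have "(\<Sum>n<N. \<Sum>k\<le>n. c (Suc k) * Ab (n - k)) \<le> (\<Sum>k<N. c (Suc k)) * (\<Sum>k<N. Ab k)"
        by (rule trunc_cauchy) (auto intro: c_nn Ab_nn)
      also have "\<dots> \<le> (\<Sum>k<N. c (Suc k)) * r"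
        using sum_le_suminf[OF Ab_summable, of "{..<N}"] Ab_nn Ab_sums
        by (intro mult_left_mono) (auto simp: sums_iff intro: sum_nonneg c_nn)
      finally show "(\<Sum>n<N. \<Sum>k\<le>n. c (Suc k) * Ab (n - k)) \<le> (\<Sum>n<N. c (Suc n)) * r" .
    qed
    finally have "(\<Sum>n<N. c (Suc n)) * (1 - r) \<le> r" by (simp add: algebra_simps)
    thus ?thesis using r1 by (simp add: field_simps)
  qed
  have "summable (\<lambda>n. c (Suc n))"
    by (rule summableI_nonneg_bounded[OF c_nn bnd])
  thus ?thesis by (simp add: summable_Suc_iff)
qed

definition Z where "Z = suminf c"

lemma Z_pos: "0 < Z"
proof -
  have "c 0 \<le> suminf c"
    using sum_le_suminf[OF c_summable, of "{0}"] c_nn by simp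
  thus ?thesis by (simp add: Z_def)
qed

definition nu :: "nat \<Rightarrow> real" where "nu n = c n / Z"

lemma nu_nn: "0 \<le> nu n" using c_nn Z_pos by (simp add: nu_def)

lemma nu_sums: "nu sums 1"
proof -
  have "(\<lambda>n. c n / Z) sums (suminf c / Z)" by (intro sums_divide summable_sums c_summable)
  thus ?thesis using Z_pos by (simp add: nu_def[abs_def] Z_def)
qed

lemma nu_cut: "cut nu n"
proof -
  have "c (Suc n) * a 0 = c 0 * Ab n + (\<Sum>k<n. c (Suc k) * Ab (n - k))"
    using c_cut[of n] by (simp add: cut_iff)
  hence "c (Suc n) * a 0 / Z = c 0 * Ab n / Z + (\<Sum>k<n. c (Suc k) * Ab (n - k)) / Z"
    by (simp add: add_divide_distrib)
  thus ?thesis unfolding cut_iff nu_def by (simp add: sum_divide_distrib)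
qed

end


lemma pmf_map_plus: "pmf (map_pmf (\<lambda>k. (c::nat) + k) P) m = (if c \<le> m then pmf P (m - c) else 0)"
proof (cases "c \<le> m")
  case True
  have "pmf (map_pmf (\<lambda>k. c + k) P) (c + (m - c)) = pmf P (m - c)"
    by (rule pmf_map_inj') (auto simp: inj_def)
  thus ?thesis using True by simp
next
  case False
  hence "m \<notin> set_pmf (map_pmf (\<lambda>k. c + k) P)" by auto
  thus ?thesis using False by (simp add: pmf_eq_0_set_pmf)
qed

lemma pmf_step: "pmf (step_pmf r n) m =
   (if n - (if n > 0 then 1 else 0) \<le> m then pmf (pois r) (m - (n - (if n > 0 then 1 else 0))) else 0)"
  unfolding step_pmf_def by (rule pmf_map_plus)

lemma pmf_bind_step: "pmf (bind_pmf \<nu> (step_pmf r)) m =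
   pmf \<nu> 0 * pmf (pois r) m + (\<Sum>j\<le>m. pmf \<nu> (Suc j) * pmf (pois r) (m - j))"
proof -
  have "pmf (bind_pmf \<nu> (step_pmf r)) m = (\<Sum>x\<in>{..Suc m}. pmf (step_pmf r x) m * pmf \<nu> x)"
    unfolding pmf_bind
    by (rule integral_measure_pmf_real) (auto simp: pmf_step split: if_splits)
  also have "\<dots> = pmf (step_pmf r 0) m * pmf \<nu> 0 + (\<Sum>j\<le>m. pmf (step_pmf r (Suc j)) m * pmf \<nu> (Suc j))"
    by (rule sum.atMost_Suc_shift)
  also have "\<dots> = pmf \<nu> 0 * pmf (pois r) m + (\<Sum>j\<le>m. pmf \<nu> (Suc j) * pmf (pois r) (m - j))"
    by (auto simp: pmf_step intro!: sum.cong)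
  finally show ?thesis .
qed

lemma pmf_sums1: "(\<lambda>n. pmf (p::nat pmf) n) sums 1"
proof -
  have "(\<Sum>n. ennreal (pmf p n)) = 1"
    using nn_integral_pmf[where p=p and A=UNIV] by (simp add: nn_integral_count_space_nat)
  hence s: "summable (\<lambda>n. pmf p n)" and e: "ennreal (\<Sum>n. pmf p n) = 1"
    using summable_suminf_not_top[of "pmf p"] suminf_ennreal[of "pmf p"] by (auto simp: pmf_nonneg)
  from e have "(\<Sum>n. pmf p n) = 1" by simp
  thus ?thesis using s by (simp add: sums_iff)
qed

lemma pois_qa: assumes "0 \<le> r" shows "qa (pmf (pois r)) r"
proof (cases "r = 0")
  case True
  show ?thesis
  proof
    have "(\<lambda>i. real i * pmf (pois r) i) = (\<lambda>_. 0)" using True by (auto simp: pois_def indicator_def)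
    thus "(\<lambda>i. real i * pmf (pois r) i) sums r" using True by simp
  qed (auto simp: pois_def True pmf_sums1)
next
  case False
  hence rp: "0 < r" using assms by simp
  show ?thesis
  proof
    show "0 < pmf (pois r) 0" using rp by (simp add: pois_def)
    have "(\<lambda>i. r * pmf (pois r) i) sums (r * 1)" by (intro sums_mult pmf_sums1)
    moreover have "(\<lambda>i. real (Suc i) * pmf (pois r) (Suc i)) = (\<lambda>i. r * pmf (pois r) i)"
    proof
      fix i
      have f: "(fact (Suc i) :: real) = real (Suc i) * fact i" by (simp add: fact_Suc)
      have "real (Suc i) * (r ^ Suc i / fact (Suc i) * exp (- r)) = r * (r ^ i / fact i * exp (- r))"
        unfolding f by (simp del: of_nat_Suc)
      thus "real (Suc i) * pmf (pois r) (Suc i) = r * pmf (pois r) i"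
        using rp by (simp add: pois_def del: of_nat_Suc)
    qed
    ultimately have "(\<lambda>i. real (Suc i) * pmf (pois r) (Suc i)) sums r" by simp
    thus "(\<lambda>i. real i * pmf (pois r) i) sums r"
      using sums_Suc_iff[of "\<lambda>i. real i * pmf (pois r) i" r] by (simp del: of_nat_Suc)
  qed (auto simp: pmf_sums1)
qed

lemma inv_bal:
  assumes "0 \<le> r"
  shows "md1_invariant r \<nu> \<longleftrightarrow> (\<forall>m. qa.bal (pmf (pois r)) (pmf \<nu>) m)"
proof -
  interpret qa "pmf (pois r)" r by (rule pois_qa[OF assms])
  show ?thesis unfolding md1_invariant_def bal_def pmf_eq_iff pmf_bind_step
    by (intro iff_allI) (rule eq_commute)
qed

lemma inv_props:
  assumes r0: "0 \<le> r" and inv: "md1_invariant r \<nu>"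
  shows "pmf \<nu> 0 = 1 - r" "r < 1"
proof -
  interpret qa "pmf (pois r)" r by (rule pois_qa[OF r0])
  have cut: "\<And>n. cut (pmf \<nu>) n" using inv inv_bal[OF r0] bal_iff_cut by blast
  show e: "pmf \<nu> 0 = 1 - r" by (rule cut_sum[OF cut pmf_nonneg pmf_sums1])
  show "r < 1"
  proof (rule ccontr)
    assume "\<not> r < 1"
    hence "pmf \<nu> 0 \<le> 0" using e by simp
    hence z: "pmf \<nu> 0 = 0" using pmf_nonneg by (metis antisym)
    have "pmf \<nu> n = 0" for n using determ[OF cut zero_cut] z by simp
    then have "(\<lambda>n. pmf \<nu> n) sums 0" by simp
    with pmf_sums1[of \<nu>] show False using sums_unique2 by fastforce
  qed
qed

lemma inv_unique:
  assumes r0: "0 \<le> r" and "md1_invariant r \<nu>" "md1_invariant r \<mu>"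
  shows "\<nu> = \<mu>"
proof (rule pmf_eqI)
  interpret qa "pmf (pois r)" r by (rule pois_qa[OF r0])
  have c1: "\<And>n. cut (pmf \<nu>) n" using assms inv_bal[OF r0] bal_iff_cut by blast
  have c2: "\<And>n. cut (pmf \<mu>) n" using assms inv_bal[OF r0] bal_iff_cut by blast
  fix i show "pmf \<nu> i = pmf \<mu> i"
    by (rule determ[OF c1 c2]) (use inv_props assms in simp)
qed

lemma inv_exists:
  assumes r0: "0 \<le> r" and r1: "r < 1"
  shows "\<exists>\<nu>. md1_invariant r \<nu>"
proof -
  interpret qa1 "pmf (pois r)" r
    by (rule qa1.intro[OF pois_qa[OF r0]]) (unfold_locales, rule r1)
  have p: "(\<integral>\<^sup>+x. ennreal (nu x) \<partial>count_space UNIV) = 1"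
    by (simp add: nn_integral_count_space_nat suminf_ennreal_eq[OF nu_nn nu_sums])
  have pm: "pmf (embed_pmf nu) = nu"
    by (rule ext, rule pmf_embed_pmf[OF nu_nn p])
  have "md1_invariant r (embed_pmf nu)"
    unfolding inv_bal[OF r0] pm using bal_iff_cut nu_cut by blast
  thus ?thesis by blast
qed

lemma pi_inv: assumes "0 \<le> r" "r < 1" shows "md1_invariant r (md1_pi r)"
proof -
  have "\<exists>!\<nu>. md1_invariant r \<nu>" using inv_exists[OF assms] inv_unique[OF assms(1)] by blast
  thus ?thesis unfolding md1_pi_def by (rule theI')
qed

lemma pos_prob_eq: "pos_prob \<nu> = 1 - pmf \<nu> 0"
proof -
  have "{n::nat. n > 0} = space (measure_pmf \<nu>) - {0}" by auto
  moreover have "measure_pmf.prob \<nu> (space (measure_pmf \<nu>) - {0}) = 1 - measure_pmf.prob \<nu> {0}"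
    by (rule measure_pmf.prob_compl) simp
  ultimately show ?thesis unfolding pos_prob_def by (simp add: measure_pmf_single)
qed

lemma pos_prob_nn: "0 \<le> pos_prob \<nu>" unfolding pos_prob_def by simp

lemma marg_inv: assumes "md1_invariant (pos_prob \<mu>) \<mu>" shows "nl_marg \<mu> t = \<mu>"
  by (induction t) (use assms in \<open>simp_all add: md1_invariant_def\<close>)

lemma path_eq: assumes "md1_invariant (pos_prob \<mu>) \<mu>"
  shows "nl_path \<mu> n = md1_path (pos_prob \<mu>) \<mu> n"
  by (induction n) (simp_all add: nl_rho_def marg_inv[OF assms])

lemma md1_len: "xs \<in> set_pmf (md1_path r \<mu> n) \<Longrightarrow> length xs = Suc n"
  by (induction n arbitrary: xs) auto

lemma md1_last: assumes "md1_invariant r \<mu>" shows "map_pmf last (md1_path r \<mu> n) = \<mu>"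
proof (induction n)
  case 0 then show ?case by (simp add: map_pmf_comp)
next
  case (Suc n)
  have "map_pmf last (md1_path r \<mu> (Suc n)) = bind_pmf (md1_path r \<mu> n) (\<lambda>xs. step_pmf r (last xs))"
    by (simp add: map_bind_pmf map_pmf_comp)
  also have "\<dots> = bind_pmf (map_pmf last (md1_path r \<mu> n)) (step_pmf r)"
    by (simp add: bind_map_pmf)
  also have "\<dots> = \<mu>" using Suc assms by (simp add: md1_invariant_def)
  finally show ?case .
qed

lemma drop_last: "length xs = Suc k \<Longrightarrow> drop k xs = [last xs]"
  by (cases xs rule: rev_cases) auto

lemma md1_shift: assumes "md1_invariant r \<mu>"
  shows "map_pmf (drop k) (md1_path r \<mu> (k + n)) = md1_path r \<mu> n"
proof (induction n)
  case 0
  have "map_pmf (drop k) (md1_path r \<mu> k) = map_pmf (\<lambda>xs. [last xs]) (md1_path r \<mu> k)"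
    by (rule map_pmf_cong[OF refl]) (auto dest: md1_len intro: drop_last)
  also have "\<dots> = map_pmf (\<lambda>x. [x]) (map_pmf last (md1_path r \<mu> k))" by (simp add: map_pmf_comp)
  also have "\<dots> = md1_path r \<mu> 0" using md1_last[OF assms] by simp
  finally show ?case by simp
next
  case (Suc n)
  let ?g = "\<lambda>xs. map_pmf (\<lambda>y. xs @ [y]) (step_pmf r (last xs))"
  have "map_pmf (drop k) (md1_path r \<mu> (k + Suc n)) =
      bind_pmf (md1_path r \<mu> (k + n)) (\<lambda>xs. map_pmf (drop k) (?g xs))"
    by (simp add: map_bind_pmf)
  also have "\<dots> = bind_pmf (md1_path r \<mu> (k + n)) (\<lambda>xs. ?g (drop k xs))"
  proof (rule bind_pmf_cong[OF refl])
    fix xs assume "xs \<in> set_pmf (md1_path r \<mu> (k + n))"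
    hence l: "length xs = Suc (k + n)" by (rule md1_len)
    hence "last (drop k xs) = last xs" by (simp add: last_drop)
    thus "map_pmf (drop k) (?g xs) = ?g (drop k xs)" using l by (simp add: map_pmf_comp)
  qed
  also have "\<dots> = bind_pmf (map_pmf (drop k) (md1_path r \<mu> (k + n))) ?g"
    by (simp add: bind_map_pmf)
  also have "\<dots> = md1_path r \<mu> (Suc n)" using Suc by simp
  finally show ?case .
qed

lemma stat_inv: assumes "nl_stationary \<mu>" shows "md1_invariant (pos_prob \<mu>) \<mu>"
proof -
  have "map_pmf (drop 1) (nl_path \<mu> (1 + 0)) = nl_path \<mu> 0"
    using assms unfolding nl_stationary_def by blast
  hence "map_pmf (\<lambda>x. [x]) (bind_pmf \<mu> (step_pmf (pos_prob \<mu>))) = map_pmf (\<lambda>x. [x]) \<mu>"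
    by (simp add: nl_rho_def map_bind_pmf bind_map_pmf map_pmf_comp)
  hence "map_pmf hd (map_pmf (\<lambda>x. [x]) (bind_pmf \<mu> (step_pmf (pos_prob \<mu>)))) =
         map_pmf hd (map_pmf (\<lambda>x. [x]) \<mu>)" by simp
  thus ?thesis unfolding md1_invariant_def by (simp add: map_pmf_comp)
qed

theorem lemma2p3:
  shows "(\<forall>\<rho>::real. 0 \<le> \<rho> \<and> \<rho> < 1 \<longrightarrow>
            (\<forall>n. nl_path (md1_pi \<rho>) n = md1_path \<rho> (md1_pi \<rho>) n)
          \<and> (\<forall>t. nl_rho (md1_pi \<rho>) t = \<rho>)
          \<and> nl_stationary (md1_pi \<rho>))
       \<and> (\<forall>\<mu>::nat pmf. nl_stationary \<mu> \<longrightarrow>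
            (\<exists>\<rho>. 0 \<le> \<rho> \<and> \<rho> < 1 \<and> \<rho> = pos_prob \<mu> \<and> \<mu> = md1_pi \<rho>))"
proof (intro conjI allI impI)
  fix \<rho> :: real assume h: "0 \<le> \<rho> \<and> \<rho> < 1"
  let ?\<mu> = "md1_pi \<rho>"
  have inv: "md1_invariant \<rho> ?\<mu>" using pi_inv h by blast
  have pp: "pos_prob ?\<mu> = \<rho>" using inv_props(1)[OF _ inv] h pos_prob_eq by simp
  have inv': "md1_invariant (pos_prob ?\<mu>) ?\<mu>" using inv pp by simp
  show "nl_path ?\<mu> n = md1_path \<rho> ?\<mu> n" for n using path_eq[OF inv'] pp by simp
  show "nl_rho ?\<mu> t = \<rho>" for t using marg_inv[OF inv'] pp by (simp add: nl_rho_def)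
  show "nl_stationary ?\<mu>"
    unfolding nl_stationary_def path_eq[OF inv'] using md1_shift[OF inv'] by blast
next
  fix \<mu> :: "nat pmf" assume "nl_stationary \<mu>"
  hence inv: "md1_invariant (pos_prob \<mu>) \<mu>" by (rule stat_inv)
  have r1: "pos_prob \<mu> < 1" by (rule inv_props(2)[OF pos_prob_nn inv])
  have "md1_invariant (pos_prob \<mu>) (md1_pi (pos_prob \<mu>))" by (rule pi_inv[OF pos_prob_nn r1])
  hence "\<mu> = md1_pi (pos_prob \<mu>)" using inv_unique[OF pos_prob_nn inv] by blast
  thus "\<exists>\<rho>. 0 \<le> \<rho> \<and> \<rho> < 1 \<and> \<rho> = pos_prob \<mu> \<and> \<mu> = md1_pi \<rho>"
    using pos_prob_nn r1 by blast
qed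

end
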